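(* Let $J\subseteq\Sigma$ and $c\in\mathbf{Z}^\Sigma$ with $c_\tau\in[1,p-1]$ for all $\tau$. Then $r=r(J,c)$ (defined using any admissible choice of $\tau_0$, if a choice is needed) satisfies $r_\tau\in[1,p]$ for all $\tau\in\Sigma$ and, for every $\tau\in\Sigma$, \[\sum_{i=0}^{f-1}(-1)^{\tau\circ\varphi^i\notin J}\,r_{\tau\circ\varphi^i}\,p^i\equiv\Omega_{\tau,c}\pmod{p^f-1}.\]
   Context: Let $p$ be a prime, $k$ a finite field of degree $f$ over $\mathbf{F}_p$, $\Sigma=\mathrm{Hom}_{\mathbf{F}_p}(k,\overline{\mathbf{F}}_p)$, $\varphi(x)=x^p$ on $k$ (so $\Sigma=\{\tau\circ\varphi^i:0\le i<f\}$). For $a\in\mathbf{Z}^\Sigma$, $\Omega_{\tau,a}=\sum_{i=0}^{f-1}p^ia_{\tau\circ\varphi^i}$. For $J\subseteq\Sigma$, $(-1)^{\tau\notin J}$ is $-1$ if $\tau\notin J$ and $1$ if $\tau\in J$. The map $\delta_J\colon\mathbf{Z}^\Sigma\times\Sigma\to\mathbf{Z}^\Sigma$: given $(x,\tau)$, let $y=\delta_J(x,\tau)$. If $1\le x_\tau\le p$, $y=x$. If $x_\tau\le0$: $y_\tau=x_\tau+p$, $y_{\tau\circ\varphi}=x_{\tau\circ\varphi}-1$ if $\tau\circ\varphi\notin J$ and $x_{\tau\circ\varphi}+1$ if $\tau\circ\varphi\in J$, and $y_\kappa=x_\kappa$ for other $\kappa$. If $x_\tau>p$: $y_\tau=x_\tau-p$,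 $y_{\tau\circ\varphi}=x_{\tau\circ\varphi}-1$ if $\tau\circ\varphi\notin J$ and $x_{\tau\circ\varphi}+1$ if $\tau\circ\varphi\in J$, and $y_\kappa=x_\kappa$ for other $\kappa$. The vector $r(J,c)$ for $c_\tau\in[1,p-1]$: define $y_0\in\mathbf{Z}^\Sigma$ by $y_{0,\tau}=c_\tau$ if $\tau\in J,\tau\circ\varphi^{-1}\in J$; $c_\tau+1$ if $\tau\in J,\tau\circ\varphi^{-1}\notin J$; $p-c_\tau$ if $\tau\notin J,\tau\circ\varphi^{-1}\in J$; $p-1-c_\tau$ if $\tau\notin J,\tau\circ\varphi^{-1}\notin J$. If $y_{0,\tau}>0$ for all $\tau$, $r(J,c)=y_0$. Otherwise choose $\tau_0$ with $y_{0,\tau_0}=0$, define $y_\kappa=\delta_J(y_{\kappa-1},\tau_0\circ\varphi^{\kappa-1})$ for $\kappa=1,\dots,f$, and set $r(J,c)=y_f$. *)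

theory Defs
  imports "HOL-Computational_Algebra.Primes"
begin

text \<open>Model: fix an embedding tau_base; the elements of Sigma are indexed by
  i in {0..<f}, index i standing for tau_base o phi^i. Then
  (index i) o phi = index ((i+1) mod f), and tau o phi^j = index ((i+j) mod f).
  Vectors in Z^Sigma are functions nat => int (only values on {0..<f} matter);
  subsets J of Sigma are sets of indices J <= {0..<f}.\<close>

definition nxt :: "nat \<Rightarrow> nat \<Rightarrow> nat" where
  "nxt f i = (i + 1) mod f"

definition prv :: "nat \<Rightarrow> nat \<Rightarrow> nat" where
  "prv f i = (i + f - 1) mod f"

definition sgnJ :: "nat set \<Rightarrow> nat \<Rightarrow> int" where
  "sgnJ J t = (if t \<in> J then 1 else -1)"

definition Omega :: "nat \<Rightarrow> nat \<Rightarrow> (nat \<Rightarrow> int) \<Rightarrow> nat \<Rightarrow> int" where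
  "Omega p f a t = (\<Sum>i<f. int p ^ i * a ((t + i) mod f))"

text \<open>The two changes
  are applied additively (relevant only when tau o phi = tau, i.e. f = 1).\<close>
definition delta :: "nat \<Rightarrow> nat \<Rightarrow> nat set \<Rightarrow> (nat \<Rightarrow> int) \<Rightarrow> nat \<Rightarrow> (nat \<Rightarrow> int)" where
  "delta p f J x t =
     (if 1 \<le> x t \<and> x t \<le> int p then x
      else (\<lambda>k. x k
               + (if k = t then (if x t \<le> 0 then int p else - int p) else 0)
               + (if k = nxt f t then sgnJ J (nxt f t) else 0)))"

definition y0 :: "nat \<Rightarrow> nat \<Rightarrow> nat set \<Rightarrow> (nat \<Rightarrow> int) \<Rightarrow> (nat \<Rightarrow> int)" where
  "y0 p f J c = (\<lambda>t.
     if t \<in> J \<and> prv f t \<in> J then c t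
     else if t \<in> J \<and> prv f t \<notin> J then c t + 1
     else if t \<notin> J \<and> prv f t \<in> J then int p - c t
     else int p - 1 - c t)"

fun yseq :: "nat \<Rightarrow> nat \<Rightarrow> nat set \<Rightarrow> (nat \<Rightarrow> int) \<Rightarrow> nat \<Rightarrow> nat \<Rightarrow> (nat \<Rightarrow> int)" where
  "yseq p f J c t0 0 = y0 p f J c"
| "yseq p f J c t0 (Suc k) = delta p f J (yseq p f J c t0 k) ((t0 + k) mod f)"

definition rvec :: "nat \<Rightarrow> nat \<Rightarrow> nat set \<Rightarrow> (nat \<Rightarrow> int) \<Rightarrow> nat \<Rightarrow> (nat \<Rightarrow> int)" where
  "rvec p f J c t0 =
     (if \<forall>t<f. 0 < y0 p f J c t then y0 p f J c else yseq p f J c t0 f)"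

end

theory Submission
  imports Defs
begin

lemma mod_lt2: "(a::nat) < 2*f \<Longrightarrow> a mod f = (if a < f then a else a - f)"
  by (simp add: le_mod_geq mod_if)

lemma idx_iff:
  assumes "t < (f::nat)" "i < f" "s < f"
  shows "((t+i) mod f = s) \<longleftrightarrow> (i = (s+f-t) mod f)"
  using assms by (auto simp: mod_lt2)

lemma idx_inj:
  assumes "t < (f::nat)" "i < f" "j < f" "(t+i) mod f = (t+j) mod f"
  shows "i = j"
proof -
  have "(t+j) mod f < f" using assms by simp
  then show ?thesis using idx_iff[OF assms(1) assms(2) \<open>(t+j) mod f < f\<close>]
     idx_iff[OF assms(1) assms(3) \<open>(t+j) mod f < f\<close>] assms(4) by simp
qed

lemma nxt_prv:
  assumes "s < f" "u < f"
  shows "(s = nxt f u) \<longleftrightarrow> (u = prv f s)"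
  using assms unfolding nxt_def prv_def by (auto simp: mod_lt2)

lemma nxt_idx: "nxt f ((t+k) mod f) = (t + Suc k) mod f"
  unfolding nxt_def by (simp add: mod_Suc_eq)

lemma omega_add: "Omega p f (\<lambda>s. a s + b s) t = Omega p f a t + Omega p f b t"
  unfolding Omega_def by (simp add: algebra_simps sum.distrib)

lemma omega_scale: "Omega p f (\<lambda>s. k * a s) t = k * Omega p f a t"
  unfolding Omega_def by (simp add: algebra_simps sum_distrib_left)

lemma omega_cong: "0 < f \<Longrightarrow> (\<And>s. s < f \<Longrightarrow> a s = b s) \<Longrightarrow> Omega p f a t = Omega p f b t"
  unfolding Omega_def by (intro sum.cong) auto

lemma omega_sum: "finite U \<Longrightarrow> Omega p f (\<lambda>s. \<Sum>u\<in>U. w u s) t = (\<Sum>u\<in>U. Omega p f (w u) t)"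
  unfolding Omega_def by (simp add: sum_distrib_left sum.swap[of _ U])

lemma omega_delta:
  assumes "s < f" "t < f"
  shows "Omega p f (\<lambda>k. if k = s then 1 else 0) t = int p ^ ((s+f-t) mod f)"
proof -
  have "Omega p f (\<lambda>k. if k = s then 1 else 0) t = (\<Sum>i<f. if i = (s+f-t) mod f then int p ^ i else 0)"
    unfolding Omega_def using idx_iff[OF assms(2) _ assms(1)] by (intro sum.cong) auto
  also have "\<dots> = int p ^ ((s+f-t) mod f)" using assms by (simp add: sum.delta)
  finally show ?thesis .
qed

lemma key_shift:
  assumes "s < f" "t < f"
  shows "(int p ^ f - 1) dvd (int p * int p ^ ((s+f-t) mod f) - int p ^ ((nxt f s + f - t) mod f))"
proof -
  define e where "e = (s+f-t) mod f"
  have e: "e < f" using assms unfolding e_def by simp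
  have ne: "(nxt f s + f - t) mod f = (if Suc e < f then Suc e else 0)"
    using assms unfolding e_def nxt_def by (auto simp: mod_lt2)
  show ?thesis
  proof (cases "Suc e < f")
    case True then show ?thesis using ne e_def by simp
  next
    case False
    then have "Suc e = f" using e by simp
    then have "int p * int p ^ e = int p ^ f" by (metis power_Suc)
    then show ?thesis using ne False e_def by simp
  qed
qed


lemma shift_zero:
  assumes "s < f" "t < f"
  shows "(int p ^ f - 1) dvd Omega p f (\<lambda>k. - int p * (if k = s then 1 else 0) + (if k = nxt f s then 1 else 0)) t"
proof -
  have n: "nxt f s < f" using assms unfolding nxt_def by simp
  have "Omega p f (\<lambda>k. - int p * (if k = s then 1 else 0) + (if k = nxt f s then 1 else 0)) t
     = - (int p * int p ^ ((s+f-t) mod f) - int p ^ ((nxt f s + f - t) mod f))"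
    unfolding omega_add omega_scale omega_delta[OF assms] omega_delta[OF n assms(2)] by simp
  then show ?thesis using key_shift[OF assms, of p] by (simp only: dvd_minus_iff)
qed

lemma sgn_sq: "sgnJ J k * sgnJ J k = 1"
  unfolding sgnJ_def by simp

lemma delta_step:
  assumes "s < f" "t < f"
    and cond: "(s \<in> J \<and> 1 \<le> x s \<and> x s \<le> 2 * int p) \<or> (s \<notin> J \<and> 1 - int p \<le> x s \<and> x s \<le> int p)"
  shows "(int p ^ f - 1) dvd (Omega p f (\<lambda>k. sgnJ J k * delta p f J x s k) t - Omega p f (\<lambda>k. sgnJ J k * x k) t)"
proof (cases "1 \<le> x s \<and> x s \<le> int p")
  case True then show ?thesis unfolding delta_def by simp
next
  case False
  have eq: "sgnJ J k * delta p f J x s k = sgnJ J k * x k + (- int p * (if k = s then 1 else 0) + (if k = nxt f s then 1 else 0))" for k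
  proof -
    have "sgnJ J k * delta p f J x s k = sgnJ J k * x k + sgnJ J k * (if k = s then (if x s \<le> 0 then int p else - int p) else 0)
       + (if k = nxt f s then sgnJ J k * sgnJ J k else 0)"
      unfolding delta_def if_not_P[OF False] by (simp add: algebra_simps)
    also have "\<dots> = sgnJ J k * x k + (- int p * (if k = s then 1 else 0) + (if k = nxt f s then 1 else 0))"
      using False cond by (auto simp: sgnJ_def)
    finally show ?thesis .
  qed
  show ?thesis unfolding eq omega_add[where a="\<lambda>k. sgnJ J k * x k"] using shift_zero[OF assms(1,2), of p] by simp
qed

lemma y0_bounds:
  assumes "1 \<le> c s" "c s \<le> int p - 1"
  shows "(s \<in> J \<longrightarrow> 1 \<le> y0 p f J c s \<and> y0 p f J c s \<le> int p) \<and> (s \<notin> J \<longrightarrow> 0 \<le> y0 p f J c s \<and> y0 p f J c s \<le> int p - 1)"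
  using assms unfolding y0_def by auto

lemma y0_cong:
  assumes "1 \<le> f" "t < f"
  shows "(int p ^ f - 1) dvd (Omega p f (\<lambda>k. sgnJ J k * y0 p f J c k) t - Omega p f c t)"
proof -
  define U where "U = {u. u < f \<and> u \<notin> J}"
  have fU: "finite U" unfolding U_def by simp
  define w where "w u = (\<lambda>k. - int p * (if k = u then 1 else 0) + (if k = nxt f u then 1 else (0::int)))" for u
  have pt: "sgnJ J s * y0 p f J c s = c s + (\<Sum>u\<in>U. w u s)" if s: "s < f" for s
  proof -
    have "(\<Sum>u\<in>U. w u s) = (\<Sum>u\<in>U. if u = s then - int p else 0) + (\<Sum>u\<in>U. if u = prv f s then 1 else 0)"
      unfolding w_def sum.distrib using nxt_prv[OF s] by (intro arg_cong2[where f="(+)"] sum.cong) (auto simp: U_def)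
    also have "\<dots> = - int p * (if s \<in> U then 1 else 0) + (if prv f s \<in> U then 1 else 0)"
      using fU by simp
    finally show ?thesis
      using s assms unfolding U_def y0_def sgnJ_def prv_def by auto
  qed
  have "Omega p f (\<lambda>k. sgnJ J k * y0 p f J c k) t = Omega p f (\<lambda>k. c k + (\<Sum>u\<in>U. w u k)) t"
    using assms by (intro omega_cong) (auto simp: pt)
  also have "\<dots> = Omega p f c t + (\<Sum>u\<in>U. Omega p f (w u) t)"
    by (simp add: omega_add omega_sum[OF fU])
  finally have "Omega p f (\<lambda>k. sgnJ J k * y0 p f J c k) t - Omega p f c t = (\<Sum>u\<in>U. Omega p f (w u) t)" by simp
  moreover have "(int p ^ f - 1) dvd (\<Sum>u\<in>U. Omega p f (w u) t)"
    by (rule dvd_sum) (unfold w_def, rule shift_zero, auto simp: U_def assms)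
  ultimately show ?thesis by simp
qed


lemma delta_vals:
  assumes cond: "(s \<in> J \<and> 1 \<le> x s \<and> x s \<le> 2 * int p) \<or> (s \<notin> J \<and> 1 - int p \<le> x s \<and> x s \<le> int p)"
  shows "nxt f s \<noteq> s \<Longrightarrow> 1 \<le> delta p f J x s s \<and> delta p f J x s s \<le> int p"
    and "k \<noteq> s \<Longrightarrow> k \<noteq> nxt f s \<Longrightarrow> delta p f J x s k = x k"
    and "nxt f s \<noteq> s \<Longrightarrow> delta p f J x s (nxt f s) = x (nxt f s) \<or> delta p f J x s (nxt f s) = x (nxt f s) + sgnJ J (nxt f s)"
  using cond unfolding delta_def by auto

lemma main2:
  assumes p2: "2 \<le> p" and f2: "2 \<le> f" and t0: "t0 < f"
    and c: "\<forall>t<f. 1 \<le> c t \<and> c t \<le> int p - 1"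
    and z: "y0 p f J c t0 = 0"
  shows "(\<forall>s<f. 1 \<le> yseq p f J c t0 f s \<and> yseq p f J c t0 f s \<le> int p)
    \<and> (\<forall>t<f. (int p ^ f - 1) dvd (Omega p f (\<lambda>k. sgnJ J k * yseq p f J c t0 f k) t - Omega p f c t))"
proof -
  define y where "y = yseq p f J c t0"
  define q where "q j = (t0 + j) mod f" for j
  define Y where "Y = y0 p f J c"
  have qlt: "q j < f" for j using f2 unfolding q_def by simp
  have qinj: "q i = q j \<longleftrightarrow> i = j" if "i < f" "j < f" for i j
    using idx_inj[OF t0 that] unfolding q_def by auto
  have qn: "nxt f (q j) = q (Suc j)" for j unfolding q_def by (rule nxt_idx)
  have ys: "y (Suc k) = delta p f J (y k) (q k)" for k unfolding y_def q_def by simp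
  have Yb: "(q j \<in> J \<longrightarrow> 1 \<le> Y (q j) \<and> Y (q j) \<le> int p) \<and> (q j \<notin> J \<longrightarrow> 0 \<le> Y (q j) \<and> Y (q j) \<le> int p - 1)" for j
    unfolding Y_def using y0_bounds c qlt by blast
  have q0: "q 0 = t0" unfolding q_def using t0 by simp
  have t0J: "t0 \<notin> J" using z c t0 unfolding y0_def by (auto split: if_splits)
  define Inv where "Inv k \<longleftrightarrow> (\<forall>j<f. (j = 0 \<longrightarrow> y k (q j) = int p) \<and> (0 < j \<and> j < k \<longrightarrow> 1 \<le> y k (q j) \<and> y k (q j) \<le> int p)
     \<and> (j = k \<longrightarrow> (q j \<in> J \<longrightarrow> 1 \<le> y k (q j) \<and> y k (q j) \<le> int p + 1) \<and> (q j \<notin> J \<longrightarrow> -1 \<le> y k (q j) \<and> y k (q j) \<le> int p - 1))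
     \<and> (k < j \<longrightarrow> y k (q j) = Y (q j)))
     \<and> (\<forall>t<f. (int p ^ f - 1) dvd (Omega p f (\<lambda>k'. sgnJ J k' * y k k') t - Omega p f c t))" for k

  have cong_step: "\<forall>t<f. (int p ^ f - 1) dvd (Omega p f (\<lambda>k'. sgnJ J k' * y (Suc k) k') t - Omega p f c t)"
    if cd: "(q k \<in> J \<and> 1 \<le> y k (q k) \<and> y k (q k) \<le> 2 * int p) \<or> (q k \<notin> J \<and> 1 - int p \<le> y k (q k) \<and> y k (q k) \<le> int p)"
      and ih: "\<forall>t<f. (int p ^ f - 1) dvd (Omega p f (\<lambda>k'. sgnJ J k' * y k k') t - Omega p f c t)" for k
  proof (intro allI impI)
    fix t assume t: "t < f"
    have "(int p ^ f - 1) dvd (Omega p f (\<lambda>k'. sgnJ J k' * y (Suc k) k') t - Omega p f (\<lambda>k'. sgnJ J k' * y k k') t)"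
      unfolding ys by (rule delta_step[where x="y k", OF qlt[of k] t cd])
    from dvd_add[OF this ih[rule_format, OF t]] show "(int p ^ f - 1) dvd (Omega p f (\<lambda>k'. sgnJ J k' * y (Suc k) k') t - Omega p f c t)"
      by simp
  qed
  have base: "Inv 1"
  proof -
    have y0e: "y 0 = Y" unfolding y_def Y_def by simp
    have cd: "(q 0 \<in> J \<and> 1 \<le> y 0 (q 0) \<and> y 0 (q 0) \<le> 2 * int p) \<or> (q 0 \<notin> J \<and> 1 - int p \<le> y 0 (q 0) \<and> y 0 (q 0) \<le> int p)"
      using q0 t0J z y0e Y_def p2 by simp
    have n01: "q 1 \<noteq> q 0" using qinj[of 1 0] f2 by simp
    have v0: "y 1 (q 0) = int p"
      using ys[of 0] y0e z n01 q0 qn[of 0] unfolding Y_def delta_def by simp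
    have vo: "y 1 (q j) = Y (q j)" if "j < f" "j \<noteq> 0" "j \<noteq> 1" for j
      using ys[of 0] y0e delta_vals(2)[where x="y 0", OF cd, of "q j" f] qn[of 0] qinj[of j 0] qinj[of j 1] that f2 by simp
    have v1: "y 1 (q 1) = Y (q 1) \<or> y 1 (q 1) = Y (q 1) + sgnJ J (q 1)"
      using ys[of 0] y0e delta_vals(3)[where x="y 0", OF cd, of f] qn[of 0] n01 by simp
    have b1: "(q 1 \<in> J \<longrightarrow> 1 \<le> y 1 (q 1) \<and> y 1 (q 1) \<le> int p + 1) \<and> (q 1 \<notin> J \<longrightarrow> -1 \<le> y 1 (q 1) \<and> y 1 (q 1) \<le> int p - 1)"
      using v1 Yb[of 1] unfolding sgnJ_def by auto
    show ?thesis unfolding Inv_def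
      using v0 vo b1 cong_step[of 0, OF cd] y0e y0_cong[of f t p J c] f2 unfolding Y_def
      by (auto simp: y0_cong)
  qed
  have step: "Inv (Suc k)" if k1: "1 \<le> k" and kf: "Suc k < f" and I: "Inv k" for k
  proof -
    have Ik: "(q k \<in> J \<longrightarrow> 1 \<le> y k (q k) \<and> y k (q k) \<le> int p + 1) \<and> (q k \<notin> J \<longrightarrow> -1 \<le> y k (q k) \<and> y k (q k) \<le> int p - 1)"
      using conjunct1[OF I[unfolded Inv_def], rule_format, of k] conjunct1[OF I[unfolded Inv_def], rule_format, of "Suc k"] kf by auto
    have cd: "(q k \<in> J \<and> 1 \<le> y k (q k) \<and> y k (q k) \<le> 2 * int p) \<or> (q k \<notin> J \<and> 1 - int p \<le> y k (q k) \<and> y k (q k) \<le> int p)"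
      using Ik p2 by auto
    have nk: "q (Suc k) \<noteq> q k" using qinj[of "Suc k" k] kf by simp
    have vk: "1 \<le> y (Suc k) (q k) \<and> y (Suc k) (q k) \<le> int p"
      using ys[of k] delta_vals(1)[where x="y k", OF cd, of f] qn[of k] nk by simp
    have vo: "y (Suc k) (q j) = y k (q j)" if "j < f" "j \<noteq> k" "j \<noteq> Suc k" for j
      using ys[of k] delta_vals(2)[where x="y k", OF cd, of "q j" f] qn[of k] qinj[of j k] qinj[of j "Suc k"] that kf by simp
    have v1: "y (Suc k) (q (Suc k)) = y k (q (Suc k)) \<or> y (Suc k) (q (Suc k)) = y k (q (Suc k)) + sgnJ J (q (Suc k))"
      using ys[of k] delta_vals(3)[where x="y k", OF cd, of f] qn[of k] nk by simp
    have yk: "y k (q (Suc k)) = Y (q (Suc k))" using conjunct1[OF I[unfolded Inv_def], rule_format, of k] conjunct1[OF I[unfolded Inv_def], rule_format, of "Suc k"] kf by auto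
    have b1: "(q (Suc k) \<in> J \<longrightarrow> 1 \<le> y (Suc k) (q (Suc k)) \<and> y (Suc k) (q (Suc k)) \<le> int p + 1) \<and> (q (Suc k) \<notin> J \<longrightarrow> -1 \<le> y (Suc k) (q (Suc k)) \<and> y (Suc k) (q (Suc k)) \<le> int p - 1)"
      using v1 yk Yb[of "Suc k"] unfolding sgnJ_def by auto
    have cg: "\<forall>t<f. (int p ^ f - 1) dvd (Omega p f (\<lambda>k'. sgnJ J k' * y (Suc k) k') t - Omega p f c t)"
      using cong_step[OF cd] I unfolding Inv_def by blast
    show ?thesis unfolding Inv_def
    proof (rule conjI[OF _ cg], intro allI impI)
      fix j assume j: "j < f"
      show "(j = 0 \<longrightarrow> y (Suc k) (q j) = int p) \<and> (0 < j \<and> j < Suc k \<longrightarrow> 1 \<le> y (Suc k) (q j) \<and> y (Suc k) (q j) \<le> int p)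
     \<and> (j = Suc k \<longrightarrow> (q j \<in> J \<longrightarrow> 1 \<le> y (Suc k) (q j) \<and> y (Suc k) (q j) \<le> int p + 1) \<and> (q j \<notin> J \<longrightarrow> -1 \<le> y (Suc k) (q j) \<and> y (Suc k) (q j) \<le> int p - 1))
     \<and> (Suc k < j \<longrightarrow> y (Suc k) (q j) = Y (q j))"
      proof (cases "j = k \<or> j = Suc k")
        case True then show ?thesis using vk b1 k1 by auto
      next
        case False
        then have "y (Suc k) (q j) = y k (q j)" using vo j by simp
        then show ?thesis using I j False unfolding Inv_def by auto
      qed
    qed
  qed
  have all: "Inv k" if "1 \<le> k" "k < f" for k
    using that
  proof (induction k)
    case 0 then show ?case by simp
  next
    case (Suc k)
    show ?case
    proof (cases "k = 0")
      case True then show ?thesis using base by simp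
    next
      case False then show ?thesis using Suc step by simp
    qed
  qed
  define k where "k = f - 1"
  have kf: "Suc k = f" and k1: "1 \<le> k" using f2 unfolding k_def by auto
  have I: "Inv k" using all k1 kf by simp
  have Ik: "(q k \<in> J \<longrightarrow> 1 \<le> y k (q k) \<and> y k (q k) \<le> int p + 1) \<and> (q k \<notin> J \<longrightarrow> -1 \<le> y k (q k) \<and> y k (q k) \<le> int p - 1)"
    using conjunct1[OF I[unfolded Inv_def], rule_format, of k] conjunct1[OF I[unfolded Inv_def], rule_format, of "Suc k"] kf by auto
  have cd: "(q k \<in> J \<and> 1 \<le> y k (q k) \<and> y k (q k) \<le> 2 * int p) \<or> (q k \<notin> J \<and> 1 - int p \<le> y k (q k) \<and> y k (q k) \<le> int p)"
    using Ik p2 by auto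
  have qf: "q (Suc k) = q 0" unfolding kf q_def by simp
  have nk: "q 0 \<noteq> q k" using qinj[of 0 k] kf k1 by simp
  have vk: "1 \<le> y (Suc k) (q k) \<and> y (Suc k) (q k) \<le> int p"
    using ys[of k] delta_vals(1)[where x="y k", OF cd, of f] qn[of k] nk qf by simp
  have vo: "y (Suc k) (q j) = y k (q j)" if "j < f" "j \<noteq> k" "j \<noteq> 0" for j
    using ys[of k] delta_vals(2)[where x="y k", OF cd, of "q j" f] qn[of k] qf qinj[of j k] qinj[of j 0] that kf by simp
  have v1: "y (Suc k) (q 0) = y k (q 0) \<or> y (Suc k) (q 0) = y k (q 0) + sgnJ J (q 0)"
    using ys[of k] delta_vals(3)[where x="y k", OF cd, of f] qn[of k] nk qf by simp
  have v0: "1 \<le> y (Suc k) (q 0) \<and> y (Suc k) (q 0) \<le> int p"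
    using v1 I kf p2 q0 t0J unfolding Inv_def sgnJ_def by auto
  have cg: "\<forall>t<f. (int p ^ f - 1) dvd (Omega p f (\<lambda>k'. sgnJ J k' * y (Suc k) k') t - Omega p f c t)"
    using cong_step[OF cd] I unfolding Inv_def by blast
  have bnd: "1 \<le> y (Suc k) s \<and> y (Suc k) s \<le> int p" if s: "s < f" for s
  proof -
    define j where "j = (s + f - t0) mod f"
    have j: "j < f" using f2 unfolding j_def by simp
    have sj: "s = q j" using idx_iff[OF t0 j s] unfolding j_def q_def by simp
    show ?thesis
    proof (cases "j = k \<or> j = 0")
      case True then show ?thesis using vk v0 sj by auto
    next
      case False
      then have "y (Suc k) (q j) = y k (q j)" using vo j by simp
      then show ?thesis using I j False sj kf unfolding Inv_def by auto
    qed
  qed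
  show ?thesis using bnd cg unfolding kf y_def by simp
qed


lemma final_form:
  assumes "\<forall>t<f. 1 \<le> r t \<and> r t \<le> int p"
    and "\<forall>t<f. (int p ^ f - 1) dvd (Omega p f (\<lambda>k. sgnJ J k * r k) t - Omega p f c t)"
  shows "(\<forall>t<f. 1 \<le> r t \<and> r t \<le> int p)
    \<and> (\<forall>t<f. (\<Sum>i<f. sgnJ J ((t + i) mod f) * r ((t + i) mod f) * int p ^ i)
               mod (int p ^ f - 1) = Omega p f c t mod (int p ^ f - 1))"
proof -
  have "(\<Sum>i<f. sgnJ J ((t + i) mod f) * r ((t + i) mod f) * int p ^ i) = Omega p f (\<lambda>k. sgnJ J k * r k) t" for t
    unfolding Omega_def by (simp add: mult_ac)
  then show ?thesis using assms by (simp add: mod_eq_dvd_iff)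
qed

theorem lemma5p6:
  fixes p f :: nat and J :: "nat set" and c :: "nat \<Rightarrow> int" and t0 :: nat
  assumes "prime p" and "1 \<le> f"
    and "J \<subseteq> {0..<f}"
    and "\<forall>t<f. 1 \<le> c t \<and> c t \<le> int p - 1"
    and "t0 < f"
    and "(\<forall>t<f. 0 < y0 p f J c t) \<or> y0 p f J c t0 = 0"
  shows "(\<forall>t<f. 1 \<le> rvec p f J c t0 t \<and> rvec p f J c t0 t \<le> int p)
    \<and> (\<forall>t<f. (\<Sum>i<f. sgnJ J ((t + i) mod f) * rvec p f J c t0 ((t + i) mod f) * int p ^ i)
               mod (int p ^ f - 1) = Omega p f c t mod (int p ^ f - 1))"
proof (rule final_form)
  have p2: "2 \<le> p" using assms(1) by (rule prime_ge_2_nat)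
  have Yb: "y0 p f J c s \<le> int p" if "s < f" for s
    using y0_bounds[of c s p J f] assms(4) that by (cases "s \<in> J") auto
  have both: "(\<forall>t<f. 1 \<le> rvec p f J c t0 t \<and> rvec p f J c t0 t \<le> int p)
     \<and> (\<forall>t<f. (int p ^ f - 1) dvd (Omega p f (\<lambda>k. sgnJ J k * rvec p f J c t0 k) t - Omega p f c t))"
  proof (cases "\<forall>t<f. 0 < y0 p f J c t")
    case True
    then show ?thesis unfolding rvec_def using Yb y0_cong[OF assms(2)] by auto
  next
    case False
    then have z: "y0 p f J c t0 = 0" using assms(6) by blast
    have r: "rvec p f J c t0 = yseq p f J c t0 f" unfolding rvec_def using False by (simp only: if_False)
    show ?thesis
    proof (cases "2 \<le> f")
      case True
      then show ?thesis unfolding r using main2[OF p2 True assms(5) assms(4) z] by blast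
    next
      case False
      then have f1: "f = 1" using assms(2) by simp
      then have t00: "t0 = 0" using assms(5) by simp
      have t0J: "t0 \<notin> J" using z assms(4,5) unfolding y0_def by (auto split: if_splits)
      have cd: "(t0 \<in> J \<and> 1 \<le> y0 p f J c t0 \<and> y0 p f J c t0 \<le> 2 * int p) \<or> (t0 \<notin> J \<and> 1 - int p \<le> y0 p f J c t0 \<and> y0 p f J c t0 \<le> int p)"
        using t0J z p2 by simp
      have ys: "yseq p f J c t0 f = delta p f J (y0 p f J c) t0" using f1 t00 by simp
      have nx: "nxt f t0 = t0" using f1 t00 unfolding nxt_def by simp
      have v: "yseq p f J c t0 f t0 = int p - 1" unfolding ys delta_def using z nx t0J by (simp add: sgnJ_def)
      have b: "\<forall>t<f. 1 \<le> yseq p f J c t0 f t \<and> yseq p f J c t0 f t \<le> int p"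
        using v f1 t00 p2 by auto
      have cg: "\<forall>t<f. (int p ^ f - 1) dvd (Omega p f (\<lambda>k. sgnJ J k * yseq p f J c t0 f k) t - Omega p f c t)"
      proof (intro allI impI)
        fix t assume t: "t < f"
        have "(int p ^ f - 1) dvd (Omega p f (\<lambda>k. sgnJ J k * yseq p f J c t0 f k) t - Omega p f (\<lambda>k. sgnJ J k * y0 p f J c k) t)"
          unfolding ys by (rule delta_step[where x="y0 p f J c", OF assms(5) t cd])
        from dvd_add[OF this y0_cong[OF assms(2) t, of p J c]] show "(int p ^ f - 1) dvd (Omega p f (\<lambda>k. sgnJ J k * yseq p f J c t0 f k) t - Omega p f c t)"
          by simp
      qed
      show ?thesis unfolding r using b cg by blast
    qed
  qed
  then show "\<forall>t<f. 1 \<le> rvec p f J c t0 t \<and> rvec p f J c t0 t \<le> int p" by blast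
  from both show "\<forall>t<f. (int p ^ f - 1) dvd (Omega p f (\<lambda>k. sgnJ J k * rvec p f J c t0 k) t - Omega p f c t)" by blast
qed

end
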